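(* Assume $f$ has a unique global maximizer $g$. For every assignment $A$ and every $v\notin\mathcal C(A)$, if $1-g[v]\in\Psi_A[v]$ then there exists $S\subseteq\mathcal C(A)$ with $S\Rightarrow v$. If furthermore the problem contains no weak epistasis, then there exists $s\in\mathcal C(A)$ with $\{s\}\Rightarrow v$.
   Context: Fix $\ell\ge 1$, loci $V=\{0,\dots,\ell-1\}$, chromosomes $\vec y\in\{0,1\}^V$, and a fitness function $f:\{0,1\}^V\to\mathbb R$ to be maximized; $g$ denotes its unique global maximizer and $g[v]$ its allele at $v$. An assignment $A$ is a set of pairs $(v,a)$ ($v\in V$, $a\in\{0,1\}$) with at most one pair per locus; $A[v]=a$ if $(v,a)\in A$, else $A[v]=*$; coverage $\mathcal C(A)=\{v:A[v]\ne *\}$. $\Psi_A$ (constrained optima) is the set of chromosomes agreeing with $A$ on $\mathcal C(A)$ and of maximum fitness among all such chromosomes; $\Psi_A[v]=\{\psi_v:\psi\in\Psi_A\}$. Epistasis: for $v\in V$ and nonempty $S\subseteq V\setminus\{v\}$, $S\Rightarrow v$ iff for every $s\in S$ there exists an assignment $A$ with $\mathcal C(A)=S$ such that $\Psi_A[v]\neq\Psi_{A\setminus\{(s,A[s])\}}[v]$; the empty set is never epistatic. An epistasis $S\Rightarrow v$ with $|S|\ge2$ is weak if no nonempty proper subset $T\subsetneq S$ satisfies $T\Rightarrow v$; the problem contains no weak epistasis if no epistasis is weak. *)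

theory Defs
  imports Main "HOL.Real"
begin

text \<open>Loci are V = {0..<l}. A chromosome is a function nat => nat with values in {0,1}
on V and value 0 outside V (extensional representation).\<close>

definition chromosomes :: "nat \<Rightarrow> (nat \<Rightarrow> nat) set" where
  "chromosomes l = {y. (\<forall>v<l. y v \<in> {0,1}) \<and> (\<forall>v\<ge>l. y v = 0)}"

definition is_assignment :: "nat \<Rightarrow> (nat \<times> nat) set \<Rightarrow> bool" where
  "is_assignment l A \<longleftrightarrow> A \<subseteq> {0..<l} \<times> {0,1} \<and>
     (\<forall>v a b. (v,a) \<in> A \<longrightarrow> (v,b) \<in> A \<longrightarrow> a = b)"

definition coverage :: "(nat \<times> nat) set \<Rightarrow> nat set" where
  "coverage A = fst ` A"

definition agrees :: "(nat \<times> nat) set \<Rightarrow> (nat \<Rightarrow> nat) \<Rightarrow> bool" where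
  "agrees A y \<longleftrightarrow> (\<forall>(v,a)\<in>A. y v = a)"

definition Psi :: "nat \<Rightarrow> ((nat \<Rightarrow> nat) \<Rightarrow> real) \<Rightarrow> (nat \<times> nat) set \<Rightarrow> (nat \<Rightarrow> nat) set" where
  "Psi l f A = {y \<in> chromosomes l. agrees A y \<and>
      (\<forall>z \<in> chromosomes l. agrees A z \<longrightarrow> f z \<le> f y)}"

definition Psi_at :: "nat \<Rightarrow> ((nat \<Rightarrow> nat) \<Rightarrow> real) \<Rightarrow> (nat \<times> nat) set \<Rightarrow> nat \<Rightarrow> nat set" where
  "Psi_at l f A v = (\<lambda>y. y v) ` Psi l f A"

definition remove_locus :: "(nat \<times> nat) set \<Rightarrow> nat \<Rightarrow> (nat \<times> nat) set" where
  "remove_locus A s = {p \<in> A. fst p \<noteq> s}"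

definition epistatic :: "nat \<Rightarrow> ((nat \<Rightarrow> nat) \<Rightarrow> real) \<Rightarrow> nat set \<Rightarrow> nat \<Rightarrow> bool" where
  "epistatic l f S v \<longleftrightarrow> v < l \<and> S \<noteq> {} \<and> S \<subseteq> {0..<l} - {v} \<and>
     (\<forall>s\<in>S. \<exists>A. is_assignment l A \<and> coverage A = S \<and>
         Psi_at l f A v \<noteq> Psi_at l f (remove_locus A s) v)"

definition weak_epistatic :: "nat \<Rightarrow> ((nat \<Rightarrow> nat) \<Rightarrow> real) \<Rightarrow> nat set \<Rightarrow> nat \<Rightarrow> bool" where
  "weak_epistatic l f S v \<longleftrightarrow> epistatic l f S v \<and> card S \<ge> 2 \<and>
     \<not> (\<exists>T. T \<noteq> {} \<and> T \<subset> S \<and> epistatic l f T v)"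

definition no_weak_epistasis :: "nat \<Rightarrow> ((nat \<Rightarrow> nat) \<Rightarrow> real) \<Rightarrow> bool" where
  "no_weak_epistasis l f \<longleftrightarrow> (\<forall>S v. \<not> weak_epistatic l f S v)"

definition unique_global_maximizer :: "nat \<Rightarrow> ((nat \<Rightarrow> nat) \<Rightarrow> real) \<Rightarrow> (nat \<Rightarrow> nat) \<Rightarrow> bool" where
  "unique_global_maximizer l f g \<longleftrightarrow> g \<in> chromosomes l \<and>
     (\<forall>y \<in> chromosomes l. y \<noteq> g \<longrightarrow> f y < f g)"

end

theory Submission
  imports Defs
begin

lemma Psi_empty:
  assumes "unique_global_maximizer l f g"
  shows "Psi_at l f {} v = {g v}"
proof -
  have "Psi l f {} = {g}"
  proof
    show "Psi l f {} \<subseteq> {g}"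
    proof
      fix y assume y: "y \<in> Psi l f {}"
      hence yc: "y \<in> chromosomes l" and ym: "\<forall>z \<in> chromosomes l. f z \<le> f y"
        unfolding Psi_def agrees_def by auto
      have gc: "g \<in> chromosomes l" and gm: "\<forall>y \<in> chromosomes l. y \<noteq> g \<longrightarrow> f y < f g"
        using assms unfolding unique_global_maximizer_def by auto
      have "f g \<le> f y" using ym gc by blast
      hence "y = g" using gm yc by force
      thus "y \<in> {g}" by simp
    qed
    show "{g} \<subseteq> Psi l f {}"
      using assms unfolding Psi_def unique_global_maximizer_def agrees_def
      by (simp add: less_imp_le) (metis order_refl less_imp_le)
  qed
  thus ?thesis unfolding Psi_at_def by simp
qed

theorem proposition7:
  fixes l :: nat and f :: "(nat \<Rightarrow> nat) \<Rightarrow> real" and g :: "nat \<Rightarrow> nat"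
    and A :: "(nat \<times> nat) set" and v :: nat
  assumes "l \<ge> 1"
    and "unique_global_maximizer l f g"
    and "is_assignment l A"
    and "v < l" and "v \<notin> coverage A"
    and "1 - g v \<in> Psi_at l f A v"
  shows "(\<exists>S \<subseteq> coverage A. epistatic l f S v) \<and>
         (no_weak_epistasis l f \<longrightarrow> (\<exists>s \<in> coverage A. epistatic l f {s} v))"
proof -
  have E: "Psi_at l f {} v = {g v}" using Psi_empty[OF assms(2)] .
  have gv: "g v \<in> {0,1}" using assms(2,4) unfolding unique_global_maximizer_def chromosomes_def by auto
  have Asub: "A \<subseteq> {0..<l} \<times> {0,1}" using assms(3) unfolding is_assignment_def by auto
  have finA: "finite A" using Asub finite_subset by blast
  define P where "P = {B. B \<subseteq> A \<and> Psi_at l f B v \<noteq> {g v}}"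
  have AP: "A \<in> P" unfolding P_def using assms(6) gv by auto
  have finP: "finite P" unfolding P_def using finA by (simp add: finite_subset)
  obtain B where BP: "B \<in> P" and Bmin: "\<forall>C\<in>P. C \<le> B \<longrightarrow> B = C"
    using finite_has_minimal[OF finP] AP by blast
  have BA: "B \<subseteq> A" and BPsi: "Psi_at l f B v \<noteq> {g v}" using BP unfolding P_def by auto
  have epi: "epistatic l f (coverage B) v"
    unfolding epistatic_def
  proof (intro conjI ballI)
    show "v < l" by fact
    show "coverage B \<noteq> {}" using BPsi E unfolding coverage_def by auto
    show "coverage B \<subseteq> {0..<l} - {v}" using BA Asub assms(5) unfolding coverage_def by fastforce
    fix s assume s: "s \<in> coverage B"
    have iB: "is_assignment l B" using assms(3) BA unfolding is_assignment_def by blast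
    have "remove_locus B s \<subset> B" using s unfolding remove_locus_def coverage_def by force
    hence "remove_locus B s \<notin> P" using Bmin by blast
    moreover have "remove_locus B s \<subseteq> A" using BA unfolding remove_locus_def by auto
    ultimately have "Psi_at l f (remove_locus B s) v = {g v}" unfolding P_def by auto
    thus "\<exists>A'. is_assignment l A' \<and> coverage A' = coverage B \<and>
          Psi_at l f A' v \<noteq> Psi_at l f (remove_locus A' s) v"
      using iB BPsi by auto
  qed
  have cBA: "coverage B \<subseteq> coverage A" using BA unfolding coverage_def by auto
  show ?thesis
  proof (intro conjI impI)
    show "\<exists>S \<subseteq> coverage A. epistatic l f S v" using epi cBA by blast
    assume nw: "no_weak_epistasis l f"
    define Q where "Q = {S. S \<subseteq> coverage A \<and> epistatic l f S v}"
    have finC: "finite (coverage A)" using finA unfolding coverage_def by simp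
    have finQ: "finite Q" unfolding Q_def using finC by (simp add: finite_subset)
    have "coverage B \<in> Q" unfolding Q_def using epi cBA by auto
    then obtain S where SQ: "S \<in> Q" and Smin: "\<forall>T\<in>Q. T \<le> S \<longrightarrow> S = T"
      using finite_has_minimal[OF finQ] by blast
    have SA: "S \<subseteq> coverage A" and Se: "epistatic l f S v" using SQ unfolding Q_def by auto
    have Sne: "S \<noteq> {}" using Se unfolding epistatic_def by auto
    have finS: "finite S" using SA finC finite_subset by blast
    have "\<not> card S \<ge> 2"
    proof
      assume c: "card S \<ge> 2"
      have "\<not> weak_epistatic l f S v" using nw unfolding no_weak_epistasis_def by blast
      then obtain T where "T \<noteq> {}" "T \<subset> S" "epistatic l f T v"
        using Se c unfolding weak_epistatic_def by blast
      hence "T \<in> Q" using SA unfolding Q_def by auto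
      thus False using Smin \<open>T \<subset> S\<close> by blast
    qed
    moreover have "card S \<noteq> 0" using finS Sne by simp
    ultimately have "card S = 1" by linarith
    then obtain s where "S = {s}" using card_1_singletonE by blast
    thus "\<exists>s \<in> coverage A. epistatic l f {s} v" using SA Se by blast
  qed
qed

end
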